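(* Let $P$ be a finite set of points in the plane in general position with $|P|$ even, and suppose $P=A\sqcup B$ where each of $A$ and $B$ is a union of vertex sets of connected components of the underlying graph of $P$. Then every halving line of $P$ passing through two points of $A$ has exactly $|B|/2$ points of $B$ strictly on each side, and symmetrically every halving line of $P$ passing through two points of $B$ has exactly $|A|/2$ points of $A$ strictly on each side.
   Context: Points are in general position if no three are collinear. For a finite set $P$ of $n$ points in general position with $n$ even, a halving line of $P$ is a line through two points of $P$ that has exactly $(n-2)/2$ points of $P$ strictly on each side. The underlying graph of $P$ has vertex set $P$, and two points are adjacent if and only if the line through them is a halving line of $P$. *)

theory Defs
  imports "HOL-Analysis.Analysis"
begin

type_synonym point = "real \<times> real"

text \<open>Orientation (signed area) of the triple p, q, r; positive means r is strictly
  on the left of the directed line from p to q, negative strictly on the right.\<close>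
definition orient :: "point \<Rightarrow> point \<Rightarrow> point \<Rightarrow> real" where
  "orient p q r = (fst q - fst p) * (snd r - snd p)
                   - (snd q - snd p) * (fst r - fst p)"

definition collinear3 :: "point \<Rightarrow> point \<Rightarrow> point \<Rightarrow> bool" where
  "collinear3 p q r \<longleftrightarrow> orient p q r = 0"

definition general_position :: "point set \<Rightarrow> bool" where
  "general_position P \<longleftrightarrow>
     (\<forall>p\<in>P. \<forall>q\<in>P. \<forall>r\<in>P. p \<noteq> q \<and> q \<noteq> r \<and> p \<noteq> r \<longrightarrow> \<not> collinear3 p q r)"

definition left_side :: "point \<Rightarrow> point \<Rightarrow> point set \<Rightarrow> point set" where
  "left_side p q S = {r \<in> S. orient p q r > 0}"

definition right_side :: "point \<Rightarrow> point \<Rightarrow> point set \<Rightarrow> point set" where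
  "right_side p q S = {r \<in> S. orient p q r < 0}"

definition halving_line :: "point set \<Rightarrow> point \<Rightarrow> point \<Rightarrow> bool" where
  "halving_line P p q \<longleftrightarrow> p \<in> P \<and> q \<in> P \<and> p \<noteq> q \<and>
     2 * card (left_side p q P) + 2 = card P \<and> 2 * card (right_side p q P) + 2 = card P"

text \<open>Edge relation of the underlying graph of P.\<close>
definition halving_edges :: "point set \<Rightarrow> (point \<times> point) set" where
  "halving_edges P = {(p, q). halving_line P p q}"

definition component :: "point set \<Rightarrow> point \<Rightarrow> point set" where
  "component P v = {w \<in> P. (v, w) \<in> (halving_edges P)\<^sup>*}"

definition union_of_components :: "point set \<Rightarrow> point set \<Rightarrow> bool" where
  "union_of_components P A \<longleftrightarrow> (\<exists>V \<subseteq> P. A = (\<Union>v\<in>V. component P v))"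

end

theory Submission
  imports Defs
begin


definition phi :: "'a set \<Rightarrow> nat \<Rightarrow> ('a \<Rightarrow> real) \<Rightarrow> 'a \<Rightarrow> int" where
 "phi P m h r = (if card {x\<in>P. h r < h x} < m then 1 else 0) - (if card {x\<in>P. h x < h r} < m then 1 else 0)"

lemma phi_neg: "phi P m (\<lambda>x. - h x) r = - phi P m h r"
  unfolding phi_def by simp

lemma phi_same:
  assumes r: "r \<in> P"
    and strict: "\<forall>x\<in>P. \<forall>y\<in>P. h x < h y \<longrightarrow> h' x < h' y"
    and no: "\<not> (\<exists>x\<in>P. x \<noteq> r \<and> h x = h r \<and> h' x \<noteq> h' r)"
  shows "phi P m h' r = phi P m h r"
proof -
  have 1: "{x\<in>P. h' r < h' x} = {x\<in>P. h r < h x}"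
  proof (intro set_eqI iffI)
    fix x assume x: "x \<in> {x\<in>P. h' r < h' x}"
    show "x \<in> {x\<in>P. h r < h x}"
    proof (cases "h x < h r")
      case True then show ?thesis using strict r x by force
    next
      case False
      then consider "h x = h r" | "h r < h x" by linarith
      then show ?thesis using x no by (cases) auto
    qed
  qed (use strict r in auto)
  have 2: "{x\<in>P. h' x < h' r} = {x\<in>P. h x < h r}"
  proof (intro set_eqI iffI)
    fix x assume x: "x \<in> {x\<in>P. h' x < h' r}"
    show "x \<in> {x\<in>P. h x < h r}"
    proof (cases "h r < h x")
      case True then show ?thesis using strict r x by force
    next
      case False
      then consider "h x = h r" | "h x < h r" by linarith
      then show ?thesis using x no by (cases) force+
    qed
  qed (use strict r in auto)
  show ?thesis unfolding phi_def 1 2 ..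
qed

lemma phi_split:
  assumes fin: "finite P" and r: "r \<in> P" and x: "x \<in> P" "x \<noteq> r" "h x = h r" "h' r < h' x"
    and cP: "card P = 2 * m"
    and strict: "\<forall>x\<in>P. \<forall>y\<in>P. h x < h y \<longrightarrow> h' x < h' y"
    and ties: "\<forall>x\<in>P. \<forall>y\<in>P. \<forall>z\<in>P. x \<noteq> y \<and> y \<noteq> z \<and> x \<noteq> z \<and> h x = h y \<and> h x = h z \<longrightarrow> False"
  shows "phi P m h' r = phi P m h r - (if card {y\<in>P. h r < h y} = m - 1 then 1 else 0)"
    and "card {y\<in>P. h r < h y} = m - 1 \<longleftrightarrow> card {y\<in>P. h y < h r} = m - 1"
proof -
  have eqx: "y = x" if "y \<in> P" "y \<noteq> r" "h y = h r" for y
    using ties[rule_format, of r x y] that x r by auto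
  have 1: "{y\<in>P. h' r < h' y} = insert x {y\<in>P. h r < h y}"
  proof (intro set_eqI iffI)
    fix y assume y: "y \<in> {y\<in>P. h' r < h' y}"
    show "y \<in> insert x {y\<in>P. h r < h y}"
    proof (cases "h y < h r")
      case True then show ?thesis using strict r y by force
    next
      case False
      then consider "h y = h r" | "h r < h y" by linarith
      then show ?thesis using y eqx by (cases) auto
    qed
  qed (use strict r x in auto)
  have 2: "{y\<in>P. h' y < h' r} = {y\<in>P. h y < h r}"
  proof (intro set_eqI iffI)
    fix y assume y: "y \<in> {y\<in>P. h' y < h' r}"
    show "y \<in> {y\<in>P. h y < h r}"
    proof (cases "h r < h y")
      case True then show ?thesis using strict r y by force
    next
      case False
      then consider "h y = h r" | "h y < h r" by linarith
      then show ?thesis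
      proof cases
        case 1 then have "y = x" using eqx y by (metis (mono_tags, lifting) less_irrefl mem_Collect_eq)
        then show ?thesis using y x by simp
      qed (use y in simp)
    qed
  qed (use strict r in auto)
  have "y \<in> {y\<in>P. h r < h y} \<union> {y\<in>P. h y < h r} \<union> {r, x}" if y: "y \<in> P" for y
  proof -
    consider "h r < h y" | "h y < h r" | "h y = h r" using linorder_less_linear[of "h r" "h y"] by auto
    then show ?thesis
    proof cases
      case 3 then show ?thesis using eqx[OF y] by (cases "y = r") auto
    qed (use y in auto)
  qed
  then have "P = {y\<in>P. h r < h y} \<union> {y\<in>P. h y < h r} \<union> {r, x}"
    using r x by blast
  moreover have "card ({y\<in>P. h r < h y} \<union> {y\<in>P. h y < h r} \<union> {r, x}) =
     card ({y\<in>P. h r < h y} \<union> {y\<in>P. h y < h r}) + card {r, x}"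
    by (rule card_Un_disjoint) (use fin x in auto)
  moreover have "card ({y\<in>P. h r < h y} \<union> {y\<in>P. h y < h r}) =
     card {y\<in>P. h r < h y} + card {y\<in>P. h y < h r}"
    by (rule card_Un_disjoint) (use fin in auto)
  moreover have "card {r, x} = 2" using x by simp
  ultimately have "card P = card {y\<in>P. h r < h y} + card {y\<in>P. h y < h r} + 2" by simp
  then have sum: "card {y\<in>P. h r < h y} + card {y\<in>P. h y < h r} + 2 = 2 * m" using cP by simp
  have cx: "card (insert x {y\<in>P. h r < h y}) = card {y\<in>P. h r < h y} + 1"
    using fin x by simp
  show "phi P m h' r = phi P m h r - (if card {y\<in>P. h r < h y} = m - 1 then 1 else 0)"
    unfolding phi_def 1 2 cx using sum by auto
  show "card {y\<in>P. h r < h y} = m - 1 \<longleftrightarrow> card {y\<in>P. h y < h r} = m - 1"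
    using sum by auto
qed

lemma tie_sum:
  fixes h :: "'a \<Rightarrow> real"
  assumes fin: "finite P" and r: "r \<in> P" and x: "x \<in> P" "x \<noteq> r" "h x = h r"
    and cP: "card P = 2 * m"
    and ties: "\<forall>x\<in>P. \<forall>y\<in>P. \<forall>z\<in>P. x \<noteq> y \<and> y \<noteq> z \<and> x \<noteq> z \<and> h x = h y \<and> h x = h z \<longrightarrow> False"
  shows "card {y\<in>P. h r < h y} + card {y\<in>P. h y < h r} + 2 = 2 * m"
proof -
  have eqx: "y = x" if "y \<in> P" "y \<noteq> r" "h y = h r" for y
    using ties[rule_format, of r x y] that x r by auto
  have "y \<in> {y\<in>P. h r < h y} \<union> {y\<in>P. h y < h r} \<union> {r, x}" if y: "y \<in> P" for y
  proof -
    consider "h r < h y" | "h y < h r" | "h y = h r" using linorder_less_linear[of "h r" "h y"] by auto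
    then show ?thesis
    proof cases
      case 3 then show ?thesis using eqx[OF y] by (cases "y = r") auto
    qed (use y in auto)
  qed
  then have "P = {y\<in>P. h r < h y} \<union> {y\<in>P. h y < h r} \<union> {r, x}"
    using r x by blast
  moreover have "card ({y\<in>P. h r < h y} \<union> {y\<in>P. h y < h r} \<union> {r, x}) =
     card ({y\<in>P. h r < h y} \<union> {y\<in>P. h y < h r}) + card {r, x}"
    by (rule card_Un_disjoint) (use fin x in auto)
  moreover have "card ({y\<in>P. h r < h y} \<union> {y\<in>P. h y < h r}) =
     card {y\<in>P. h r < h y} + card {y\<in>P. h y < h r}"
    by (rule card_Un_disjoint) (use fin in auto)
  moreover have "card {r, x} = 2" using x by simp
  ultimately show ?thesis using cP by simp
qed

lemma phi_split_down:
  assumes fin: "finite P" and r: "r \<in> P" and x: "x \<in> P" "x \<noteq> r" "h x = h r" "h' x < h' r"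
    and cP: "card P = 2 * m"
    and strict: "\<forall>x\<in>P. \<forall>y\<in>P. h x < h y \<longrightarrow> h' x < h' y"
    and ties: "\<forall>x\<in>P. \<forall>y\<in>P. \<forall>z\<in>P. x \<noteq> y \<and> y \<noteq> z \<and> x \<noteq> z \<and> h x = h y \<and> h x = h z \<longrightarrow> False"
  shows "phi P m h' r = phi P m h r + (if card {y\<in>P. h y < h r} = m - 1 then 1 else 0)"
proof -
  have "phi P m (\<lambda>y. - h' y) r = phi P m (\<lambda>y. - h y) r - (if card {y\<in>P. - h r < - h y} = m - 1 then 1 else 0)"
    by (rule phi_split(1)[OF fin r x(1,2) _ _ cP]) (use x strict ties in auto)
  then show ?thesis by (simp add: phi_neg)
qed

lemma phi_nonmed:
  assumes fin: "finite P" and r: "r \<in> P" and nm: "card {y\<in>P. h r < h y} \<noteq> m - 1"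
    and cP: "card P = 2 * m"
    and strict: "\<forall>x\<in>P. \<forall>y\<in>P. h x < h y \<longrightarrow> h' x < h' y"
    and ties: "\<forall>x\<in>P. \<forall>y\<in>P. \<forall>z\<in>P. x \<noteq> y \<and> y \<noteq> z \<and> x \<noteq> z \<and> h x = h y \<and> h x = h z \<longrightarrow> False"
  shows "phi P m h' r = phi P m h r"
proof (cases "\<exists>x\<in>P. x \<noteq> r \<and> h x = h r \<and> h' x \<noteq> h' r")
  case False then show ?thesis using phi_same[OF r strict] by blast
next
  case True
  then obtain x where x: "x \<in> P" "x \<noteq> r" "h x = h r" "h' x \<noteq> h' r" by blast
  have s: "card {y\<in>P. h r < h y} + card {y\<in>P. h y < h r} + 2 = 2 * m"
    by (rule tie_sum[OF fin r x(1-3) cP ties])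
  show ?thesis
  proof (cases "h' r < h' x")
    case True then show ?thesis using phi_split(1)[OF fin r x(1-3) True cP strict ties] nm by simp
  next
    case False then have "h' x < h' r" using x(4) by linarith
    then show ?thesis using phi_split_down[OF fin r x(1-3) _ cP strict ties] nm s by simp
  qed
qed

lemma D_inv:
  assumes fin: "finite P" and BP: "B \<subseteq> P" and cP: "card P = 2 * m"
    and strict: "\<forall>x\<in>P. \<forall>y\<in>P. h x < h y \<longrightarrow> h' x < h' y"
    and ties: "\<forall>x\<in>P. \<forall>y\<in>P. \<forall>z\<in>P. x \<noteq> y \<and> y \<noteq> z \<and> x \<noteq> z \<and> h x = h y \<and> h x = h z \<longrightarrow> False"
    and med: "\<forall>p\<in>P. \<forall>q\<in>P. p \<noteq> q \<and> h p = h q \<and> card {x\<in>P. h p < h x} = m - 1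
                 \<and> card {x\<in>P. h x < h p} = m - 1 \<longrightarrow> (p \<in> B \<longleftrightarrow> q \<in> B)"
  shows "(\<Sum>r\<in>B. phi P m h' r) = (\<Sum>r\<in>B. phi P m h r)"
proof (cases "\<exists>p\<in>P. \<exists>x\<in>P. x \<noteq> p \<and> h x = h p \<and> h' x \<noteq> h' p \<and> card {y\<in>P. h p < h y} = m - 1")
  case False
  have "phi P m h' r = phi P m h r" if "r \<in> B" for r
  proof (cases "card {y\<in>P. h r < h y} = m - 1")
    case True
    then have "\<not> (\<exists>x\<in>P. x \<noteq> r \<and> h x = h r \<and> h' x \<noteq> h' r)" using False that BP by blast
    then show ?thesis using phi_same[OF _ strict] that BP by blast
  next
    case False then show ?thesis using phi_nonmed[OF fin _ False cP strict ties] that BP by blast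
  qed
  then show ?thesis by (rule sum.cong[OF refl])
next
  case True
  from True obtain p where p: "p \<in> P" and ex: "\<exists>x\<in>P. x \<noteq> p \<and> h x = h p \<and> h' x \<noteq> h' p \<and> card {y\<in>P. h p < h y} = m - 1"
    by (rule bexE)
  from ex obtain x where x: "x \<in> P" and c: "x \<noteq> p \<and> h x = h p \<and> h' x \<noteq> h' p \<and> card {y\<in>P. h p < h y} = m - 1"
    by (rule bexE)
  note px = p x c[THEN conjunct1] c[THEN conjunct2, THEN conjunct1] c[THEN conjunct2, THEN conjunct2, THEN conjunct1]
     c[THEN conjunct2, THEN conjunct2, THEN conjunct2]
  have "\<exists>p0 q0. p0 \<in> P \<and> q0 \<in> P \<and> p0 \<noteq> q0 \<and> h p0 = h q0 \<and> h' p0 < h' q0 \<and> card {y\<in>P. h p0 < h y} = m - 1"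
  proof (cases "h' p < h' x")
    case True
    have "p \<noteq> x" "h p = h x" using px(3,4) by auto
    then show ?thesis using px(1,2) True px(6) by (intro exI[of _ p] exI[of _ x] conjI)
  next
    case False then have "h' x < h' p" using px by linarith
    moreover have "card {y\<in>P. h x < h y} = m - 1" using px(4,6) by simp
    ultimately show ?thesis using px(1,2,3,4) by (intro exI[of _ x] exI[of _ p] conjI)
  qed
  then obtain p0 q0 where pq: "p0 \<in> P" "q0 \<in> P" "p0 \<noteq> q0" "h p0 = h q0" "h' p0 < h' q0"
    and ab: "card {y\<in>P. h p0 < h y} = m - 1" by blast
  have s: "card {y\<in>P. h p0 < h y} + card {y\<in>P. h y < h p0} + 2 = 2 * m"
    by (rule tie_sum[OF fin pq(1) pq(2)]) (use pq cP ties in auto)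
  have be: "card {y\<in>P. h y < h p0} = m - 1" using s ab by simp
  have ph0: "phi P m h' p0 = phi P m h p0 - 1"
    using phi_split(1)[OF fin pq(1) pq(2) _ _ pq(5) cP strict ties] pq ab by simp
  have ph1: "phi P m h' q0 = phi P m h q0 + 1"
    using phi_split_down[OF fin pq(2) pq(1) _ _ pq(5) cP strict ties] pq be by simp
  have other: "phi P m h' r = phi P m h r" if r: "r \<in> P" "r \<noteq> p0" "r \<noteq> q0" for r
  proof (cases "\<exists>y\<in>P. y \<noteq> r \<and> h y = h r \<and> h' y \<noteq> h' r")
    case False then show ?thesis using phi_same[OF r(1) strict] by blast
  next
    case True
    then obtain y where y: "y \<in> P" "y \<noteq> r" "h y = h r" by blast
    have sr: "card {y\<in>P. h r < h y} + card {y\<in>P. h y < h r} + 2 = 2 * m"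
      by (rule tie_sum[OF fin r(1) y cP ties])
    have ne: "h r \<noteq> h p0" using ties[rule_format, of r p0 q0] r pq by auto
    have "card {y\<in>P. h r < h y} \<noteq> m - 1"
    proof (cases "h r < h p0")
      case True
      have "insert p0 (insert q0 {y\<in>P. h p0 < h y}) \<subseteq> {y\<in>P. h r < h y}"
        using True pq by auto
      then have "card (insert p0 (insert q0 {y\<in>P. h p0 < h y})) \<le> card {y\<in>P. h r < h y}"
        by (intro card_mono) (use fin in auto)
      moreover have "card (insert p0 (insert q0 {y\<in>P. h p0 < h y})) = m - 1 + 2"
        using ab pq fin by simp
      ultimately show ?thesis by linarith
    next
      case False
      then have lt: "h p0 < h r" using ne by linarith
      have "insert p0 (insert q0 {y\<in>P. h y < h p0}) \<subseteq> {y\<in>P. h y < h r}"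
        using lt pq by auto
      then have "card (insert p0 (insert q0 {y\<in>P. h y < h p0})) \<le> card {y\<in>P. h y < h r}"
        by (intro card_mono) (use fin in auto)
      moreover have "card (insert p0 (insert q0 {y\<in>P. h y < h p0})) = m - 1 + 2"
        using be pq fin by simp
      ultimately show ?thesis using sr by linarith
    qed
    then show ?thesis by (rule phi_nonmed[OF fin r(1) _ cP strict ties])
  qed
  have finB: "finite B" using fin BP finite_subset by blast
  show ?thesis
  proof (cases "p0 \<in> B")
    case True
    then have q: "q0 \<in> B" using med pq ab be by blast
    have split: "(\<Sum>r\<in>B. f r) = f p0 + f q0 + (\<Sum>r\<in>B - {p0} - {q0}. f r)" for f :: "_ \<Rightarrow> int"
    proof -
      have "(\<Sum>r\<in>B. f r) = f p0 + (\<Sum>r\<in>B - {p0}. f r)" by (rule sum.remove[OF finB True])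
      moreover have "(\<Sum>r\<in>B - {p0}. f r) = f q0 + (\<Sum>r\<in>B - {p0} - {q0}. f r)"
        by (rule sum.remove) (use finB q pq in auto)
      ultimately show ?thesis by simp
    qed
    have "(\<Sum>r\<in>B - {p0} - {q0}. phi P m h' r) = (\<Sum>r\<in>B - {p0} - {q0}. phi P m h r)"
      by (rule sum.cong[OF refl]) (use other BP in auto)
    then show ?thesis unfolding split[of "phi P m h'"] split[of "phi P m h"] ph0 ph1 by simp
  next
    case False
    then have q: "q0 \<notin> B" using med pq ab be by blast
    show ?thesis by (rule sum.cong[OF refl]) (use other BP False q in auto)
  qed
qed



definition crs :: "real \<Rightarrow> real \<Rightarrow> point \<Rightarrow> real" where
  "crs ua ub r = ua * snd r - ub * fst r"

lemma orient_identity: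
  "(ua^2 + ub^2) * orient x y z =
     ((fst y - fst x) * ua + (snd y - snd x) * ub) * (crs ua ub z - crs ua ub x)
   - ((fst z - fst x) * ua + (snd z - snd x) * ub) * (crs ua ub y - crs ua ub x)"
  unfolding orient_def crs_def by (simp add: algebra_simps power2_eq_square)

lemma norm_identity:
  "(ua^2 + ub^2) * ((fst y - fst x)^2 + (snd y - snd x)^2) =
     ((fst y - fst x) * ua + (snd y - snd x) * ub)^2 + (crs ua ub y - crs ua ub x)^2"
  unfolding crs_def by (simp add: algebra_simps power2_eq_square)

lemma ties_geo:
  assumes gp: "general_position P" and u: "ua^2 + ub^2 > 0"
  shows "\<forall>x\<in>P. \<forall>y\<in>P. \<forall>z\<in>P. x \<noteq> y \<and> y \<noteq> z \<and> x \<noteq> z \<and> crs ua ub x = crs ua ub y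
            \<and> crs ua ub x = crs ua ub z \<longrightarrow> False"
proof (intro ballI impI)
  fix x y z assume xyz: "x \<in> P" "y \<in> P" "z \<in> P"
    and h: "x \<noteq> y \<and> y \<noteq> z \<and> x \<noteq> z \<and> crs ua ub x = crs ua ub y \<and> crs ua ub x = crs ua ub z"
  have "(ua^2 + ub^2) * orient x y z = 0" using h by (simp add: orient_identity)
  then have "orient x y z = 0" using u by auto
  then show False using gp xyz h unfolding general_position_def collinear3_def by blast
qed

lemma orient_swap: "orient q p r = - orient p q r"
  unfolding orient_def by (simp add: algebra_simps)

lemma halving_sym: "halving_line P p q \<Longrightarrow> halving_line P q p"
proof -
  have l: "left_side q p P = right_side p q P" and r: "right_side q p P = left_side p q P"
    unfolding left_side_def right_side_def orient_swap[of q p] by auto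
  show "halving_line P p q \<Longrightarrow> halving_line P q p"
    unfolding halving_line_def l r by auto
qed

lemma same_class:
  assumes "P = A \<union> B" "A \<inter> B = {}" "union_of_components P A"
    and hl: "halving_line P p q" and p: "p \<in> B"
  shows "q \<in> B"
proof (rule ccontr)
  assume "q \<notin> B"
  moreover have "q \<in> P" using hl unfolding halving_line_def by auto
  ultimately have "q \<in> A" using assms by auto
  then obtain v where "(v, q) \<in> (halving_edges P)\<^sup>*" and cv: "component P v \<subseteq> A"
    using assms(3) unfolding union_of_components_def component_def by auto
  moreover have "(q, p) \<in> halving_edges P" using halving_sym[OF hl] unfolding halving_edges_def by auto
  ultimately have "(v, p) \<in> (halving_edges P)\<^sup>*" by simp
  then have "p \<in> component P v" using p assms(1) unfolding component_def by auto
  then show False using cv p assms(2) by auto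
qed

lemma halving_geo:
  assumes fin: "finite P" and cP: "card P = 2 * m" and u: "ua^2 + ub^2 > 0"
    and pq: "p \<in> P" "q \<in> P" "p \<noteq> q" "crs ua ub p = crs ua ub q"
    and ab: "card {x\<in>P. crs ua ub p < crs ua ub x} = m - 1"
    and be: "card {x\<in>P. crs ua ub x < crs ua ub p} = m - 1"
  shows "halving_line P p q"
proof -
  define c where "c = (fst q - fst p) * ua + (snd q - snd p) * ub"
  define K where "K = ua^2 + ub^2"
  have key: "K * orient p q r = c * (crs ua ub r - crs ua ub p)" for r
    using orient_identity[of ua ub p q r] pq(4) unfolding K_def c_def by simp
  have "c \<noteq> 0"
  proof
    assume "c = 0"
    then have "K * ((fst q - fst p)^2 + (snd q - snd p)^2) = 0"
      using norm_identity[of ua ub q p] pq(4) unfolding K_def c_def by simp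
    then have "(fst q - fst p)^2 + (snd q - snd p)^2 = 0" using u unfolding K_def by auto
    then have "fst q = fst p" "snd q = snd p" by (simp_all add: sum_power2_eq_zero_iff)
    then show False using pq(3) by (simp add: prod_eq_iff)
  qed
  have Kp: "K > 0" using u unfolding K_def .
  have "card P > 0" using pq(1) fin card_gt_0_iff by blast
  then have m1: "m \<ge> 1" using cP by simp
  show ?thesis
  proof (cases "c > 0")
    case True
    have "orient p q r > 0 \<longleftrightarrow> crs ua ub p < crs ua ub r" for r
    proof -
      have "orient p q r > 0 \<longleftrightarrow> K * orient p q r > 0" using Kp by (simp add: zero_less_mult_iff)
      also have "\<dots> \<longleftrightarrow> crs ua ub r - crs ua ub p > 0" unfolding key using True by (simp add: zero_less_mult_iff)
      finally show ?thesis by simp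
    qed
    moreover have "orient p q r < 0 \<longleftrightarrow> crs ua ub r < crs ua ub p" for r
    proof -
      have "orient p q r < 0 \<longleftrightarrow> K * orient p q r < 0" using Kp by (simp add: mult_less_0_iff)
      also have "\<dots> \<longleftrightarrow> crs ua ub r - crs ua ub p < 0" unfolding key using True by (simp add: mult_less_0_iff)
      finally show ?thesis by simp
    qed
    ultimately have "left_side p q P = {x\<in>P. crs ua ub p < crs ua ub x}"
      "right_side p q P = {x\<in>P. crs ua ub x < crs ua ub p}"
      unfolding left_side_def right_side_def by auto
    then show ?thesis unfolding halving_line_def using pq ab be cP m1 by simp
  next
    case False
    then have cn: "c < 0" using \<open>c \<noteq> 0\<close> by linarith
    have "orient p q r > 0 \<longleftrightarrow> crs ua ub r < crs ua ub p" for r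
    proof -
      have "orient p q r > 0 \<longleftrightarrow> K * orient p q r > 0" using Kp by (simp add: zero_less_mult_iff)
      also have "\<dots> \<longleftrightarrow> crs ua ub r - crs ua ub p < 0" unfolding key using cn by (simp add: zero_less_mult_iff)
      finally show ?thesis by simp
    qed
    moreover have "orient p q r < 0 \<longleftrightarrow> crs ua ub p < crs ua ub r" for r
    proof -
      have "orient p q r < 0 \<longleftrightarrow> K * orient p q r < 0" using Kp by (simp add: mult_less_0_iff)
      also have "\<dots> \<longleftrightarrow> crs ua ub r - crs ua ub p > 0" unfolding key using cn by (simp add: mult_less_0_iff)
      finally show ?thesis by simp
    qed
    ultimately have "left_side p q P = {x\<in>P. crs ua ub x < crs ua ub p}"
      "right_side p q P = {x\<in>P. crs ua ub p < crs ua ub x}"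
      unfolding left_side_def right_side_def by auto
    then show ?thesis unfolding halving_line_def using pq ab be cP m1 by simp
  qed
qed



lemma main_half:
  fixes P A B :: "point set"
  assumes fin: "finite P" and gp: "general_position P" and ev: "even (card P)"
    and PAB: "P = A \<union> B" and dis: "A \<inter> B = {}" and uA: "union_of_components P A"
    and a: "a \<in> A" "a' \<in> A" and hl: "halving_line P a a'"
  shows "card (left_side a a' B) = card (right_side a a' B) \<and>
         card (left_side a a' B) + card (right_side a a' B) = card B"
proof -
  obtain m where cP: "card P = 2 * m" using ev by (auto elim: evenE)
  have BP: "B \<subseteq> P" using PAB by auto
  have finB: "finite B" using fin BP finite_subset by blast
  define d1 where "d1 = fst a' - fst a"
  define d2 where "d2 = snd a' - snd a"
  define H where "H t = crs (cos t * d1 - sin t * d2) (cos t * d2 + sin t * d1)" for t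
  define D where "D t = (\<Sum>r\<in>B. phi P m (H t) r)" for t
  have aa: "a \<noteq> a'" "a \<in> P" "a' \<in> P" using hl unfolding halving_line_def by auto
  have dpos: "d1^2 + d2^2 > 0"
  proof -
    have "\<not> (d1 = 0 \<and> d2 = 0)" using aa(1) unfolding d1_def d2_def by (auto simp: prod_eq_iff)
    then show ?thesis by (simp add: sum_power2_gt_zero_iff)
  qed
  have unorm: "(cos t * d1 - sin t * d2)^2 + (cos t * d2 + sin t * d1)^2 = d1^2 + d2^2" for t
  proof -
    have "(cos t * d1 - sin t * d2)^2 + (cos t * d2 + sin t * d1)^2 = ((sin t)^2 + (cos t)^2) * (d1^2 + d2^2)"
      by algebra
    then show ?thesis by simp
  qed
  have med: "\<forall>p\<in>P. \<forall>q\<in>P. p \<noteq> q \<and> H t p = H t q \<and> card {x\<in>P. H t p < H t x} = m - 1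
                 \<and> card {x\<in>P. H t x < H t p} = m - 1 \<longrightarrow> (p \<in> B \<longleftrightarrow> q \<in> B)" for t
  proof (intro ballI impI)
    fix p q assume pq: "p \<in> P" "q \<in> P" and c: "p \<noteq> q \<and> H t p = H t q \<and> card {x\<in>P. H t p < H t x} = m - 1
                 \<and> card {x\<in>P. H t x < H t p} = m - 1"
    have c': "p \<noteq> q" "H t p = H t q" "card {x\<in>P. H t p < H t x} = m - 1" "card {x\<in>P. H t x < H t p} = m - 1"
      using c by blast+
    have "halving_line P p q"
      by (rule halving_geo[where ua="cos t * d1 - sin t * d2" and ub="cos t * d2 + sin t * d1", OF fin cP _ pq c'[unfolded H_def]]) (simp add: unorm dpos)
    then show "p \<in> B \<longleftrightarrow> q \<in> B"
      using same_class[OF PAB dis uA] halving_sym by blast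
  qed
  have ties: "\<forall>x\<in>P. \<forall>y\<in>P. \<forall>z\<in>P. x \<noteq> y \<and> y \<noteq> z \<and> x \<noteq> z \<and> H t x = H t y \<and> H t x = H t z \<longrightarrow> False" for t
    unfolding H_def by (rule ties_geo[OF gp]) (use unorm dpos in simp)
  have cont: "isCont (\<lambda>s. H s y - H s x) t" for x y t
    unfolding H_def crs_def by (intro continuous_intros)
  have loc: "\<forall>t\<in>UNIV. eventually (\<lambda>s. D t = D s) (at t within UNIV)"
  proof
    fix t :: real
    have "\<forall>x\<in>P. \<forall>y\<in>P. eventually (\<lambda>s. H t x < H t y \<longrightarrow> H s x < H s y) (at t)"
    proof (intro ballI)
      fix x y
      show "eventually (\<lambda>s. H t x < H t y \<longrightarrow> H s x < H s y) (at t)"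
      proof (cases "H t x < H t y")
        case True
        have "((\<lambda>s. H s y - H s x) \<longlongrightarrow> H t y - H t x) (at t)"
          by (rule cont[unfolded isCont_def])
        then have "eventually (\<lambda>s. 0 < H s y - H s x) (at t)"
          by (rule order_tendstoD(1)) (use True in simp)
        then show ?thesis by (rule eventually_mono) simp
      qed simp
    qed
    then have "eventually (\<lambda>s. \<forall>x\<in>P. \<forall>y\<in>P. H t x < H t y \<longrightarrow> H s x < H s y) (at t)"
      using fin by (intro eventually_ball_finite ballI) (auto intro: eventually_ball_finite)
    then show "eventually (\<lambda>s. D t = D s) (at t within UNIV)"
    proof (rule eventually_mono)
      fix s assume "\<forall>x\<in>P. \<forall>y\<in>P. H t x < H t y \<longrightarrow> H s x < H s y"
      then show "D t = D s" unfolding D_def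
        using D_inv[OF fin BP cP _ ties med] by metis
    qed
  qed
  have D0pi: "D 0 = D pi"
    by (rule connected_local_const[OF connected_UNIV _ _ loc]) auto
  have Hpi: "H pi = (\<lambda>r. - H 0 r)" unfolding H_def crs_def by (auto simp: fun_eq_iff)
  have "D pi = - D 0" unfolding D_def Hpi phi_neg by (simp add: sum_negf)
  then have D0: "D 0 = 0" using D0pi by simp
  define H0 where "H0 r = d1 * snd r - d2 * fst r" for r
  have H0: "H 0 = H0" unfolding H_def H0_def crs_def by (auto simp: fun_eq_iff)
  have oH: "orient a a' r = H0 r - H0 a" for r
    unfolding orient_def H0_def d1_def d2_def by (simp add: algebra_simps)
  have LS: "left_side a a' S = {x\<in>S. H0 a < H0 x}" for S
    unfolding left_side_def oH by auto
  have RS: "right_side a a' S = {x\<in>S. H0 x < H0 a}" for S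
    unfolding right_side_def oH by auto
  have m1: "m \<ge> 1" using hl cP unfolding halving_line_def by simp
  have cL: "card {x\<in>P. H0 a < H0 x} = m - 1" using hl cP unfolding halving_line_def LS by auto
  have cR: "card {x\<in>P. H0 x < H0 a} = m - 1" using hl cP unfolding halving_line_def RS by auto
  have Ha': "H0 a' = H0 a" using oH[of a'] unfolding orient_def by simp
  have nz: "orient a a' r \<noteq> 0" if "r \<in> B" for r
  proof -
    have "r \<noteq> a" "r \<noteq> a'" "r \<in> P" using that a dis BP by auto
    then show ?thesis using gp[unfolded general_position_def, rule_format, of a a' r] aa
      unfolding collinear3_def by simp
  qed
  have phi0: "phi P m H0 r = (if 0 < orient a a' r then 1 else -1)" if r: "r \<in> B" for r
  proof (cases "0 < orient a a' r")
    case True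
    then have lt: "H0 a < H0 r" using oH by simp
    have "{x\<in>P. H0 r < H0 x} \<subseteq> {x\<in>P. H0 a < H0 x}" using lt by auto
    then have c1: "card {x\<in>P. H0 r < H0 x} \<le> m - 1" using cL card_mono fin
      by (metis (no_types, lifting) finite_subset mem_Collect_eq subsetI)
    have "insert a (insert a' {x\<in>P. H0 x < H0 a}) \<subseteq> {x\<in>P. H0 x < H0 r}" using lt aa Ha' by auto
    then have "card (insert a (insert a' {x\<in>P. H0 x < H0 a})) \<le> card {x\<in>P. H0 x < H0 r}"
      by (intro card_mono) (use fin in auto)
    moreover have "card (insert a (insert a' {x\<in>P. H0 x < H0 a})) = m - 1 + 2"
      using cR aa fin Ha' by simp
    ultimately have c2: "card {x\<in>P. H0 x < H0 r} \<ge> m" by linarith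
    show ?thesis unfolding phi_def using c1 c2 m1 True by simp
  next
    case False
    then have "orient a a' r < 0" using nz[OF r] by linarith
    then have lt: "H0 r < H0 a" using oH by simp
    have "{x\<in>P. H0 x < H0 r} \<subseteq> {x\<in>P. H0 x < H0 a}" using lt by auto
    then have c1: "card {x\<in>P. H0 x < H0 r} \<le> m - 1" using cR card_mono fin
      by (metis (no_types, lifting) finite_subset mem_Collect_eq subsetI)
    have "insert a (insert a' {x\<in>P. H0 a < H0 x}) \<subseteq> {x\<in>P. H0 r < H0 x}" using lt aa Ha' by auto
    then have "card (insert a (insert a' {x\<in>P. H0 a < H0 x})) \<le> card {x\<in>P. H0 r < H0 x}"
      by (intro card_mono) (use fin in auto)
    moreover have "card (insert a (insert a' {x\<in>P. H0 a < H0 x})) = m - 1 + 2"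
      using cL aa fin Ha' by simp
    ultimately have c2: "card {x\<in>P. H0 r < H0 x} \<ge> m" by linarith
    show ?thesis unfolding phi_def using c1 c2 m1 False by simp
  qed
  have "D 0 = (\<Sum>r\<in>B. (if 0 < orient a a' r then 1 else -1))"
    unfolding D_def H0 by (rule sum.cong) (auto simp: phi0)
  also have "\<dots> = int (card (left_side a a' B)) - int (card (right_side a a' B))"
  proof -
    have "B \<inter> {r. 0 < orient a a' r} = left_side a a' B" unfolding left_side_def by auto
    moreover have "B \<inter> - {r. 0 < orient a a' r} = right_side a a' B"
      unfolding right_side_def using nz by force
    ultimately show ?thesis using finB by (simp add: sum.If_cases)
  qed
  finally have eq: "card (left_side a a' B) = card (right_side a a' B)" using D0 by simp
  have "B = left_side a a' B \<union> right_side a a' B"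
    unfolding left_side_def right_side_def using nz by force
  moreover have "card (left_side a a' B \<union> right_side a a' B) = card (left_side a a' B) + card (right_side a a' B)"
    by (rule card_Un_disjoint) (use finB in \<open>auto simp: left_side_def right_side_def\<close>)
  ultimately show ?thesis using eq by simp
qed


theorem mainTheorem3:
  fixes P A B :: "point set"
  assumes "finite P"
    and "general_position P"
    and "even (card P)"
    and "P = A \<union> B" and "A \<inter> B = {}"
    and "union_of_components P A" and "union_of_components P B"
  shows "(\<forall>p\<in>A. \<forall>q\<in>A. halving_line P p q \<longrightarrow>
            real (card (left_side p q B)) = real (card B) / 2 \<and>
            real (card (right_side p q B)) = real (card B) / 2) \<and>
         (\<forall>p\<in>B. \<forall>q\<in>B. halving_line P p q \<longrightarrow>
            real (card (left_side p q A)) = real (card A) / 2 \<and>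
            real (card (right_side p q A)) = real (card A) / 2)"
proof (intro conjI ballI impI)
  fix p q assume pq: "p \<in> A" "q \<in> A" "halving_line P p q"
  have h: "card (left_side p q B) = card (right_side p q B) \<and>
         card (left_side p q B) + card (right_side p q B) = card B"
    by (rule main_half[OF assms(1,2,3,4,5,6) pq])
  then have "real (card (left_side p q B)) = real (card (right_side p q B))"
    "real (card (left_side p q B)) + real (card (right_side p q B)) = real (card B)"
    by (simp_all only: of_nat_add[symmetric]) auto
  then show "real (card (left_side p q B)) = real (card B) / 2"
    "real (card (right_side p q B)) = real (card B) / 2" by linarith+
next
  fix p q assume pq: "p \<in> B" "q \<in> B" "halving_line P p q"
  have h: "card (left_side p q A) = card (right_side p q A) \<and>
         card (left_side p q A) + card (right_side p q A) = card A"
    by (rule main_half[OF assms(1,2,3) _ _ assms(7) pq]) (use assms(4,5) in auto)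
  then have "real (card (left_side p q A)) = real (card (right_side p q A))"
    "real (card (left_side p q A)) + real (card (right_side p q A)) = real (card A)"
    by (simp_all only: of_nat_add[symmetric]) auto
  then show "real (card (left_side p q A)) = real (card A) / 2"
    "real (card (right_side p q A)) = real (card A) / 2" by linarith+
qed

end
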